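(* Let $G$ and $H$ be finite abelian groups, written additively, of the same even order $k>2$, let $f:G\to H$ be semi-planar, and suppose $S(G,H;f)$ splits into two substructures $S_1$ and $S_2$ with $\mathcal{L}(0,0)\in S_1$. For $a\in G$ let $P_a^1=\{b\in H : \mathcal{L}(a,b)\in S_1\}$. Then the set $A=\{a\in G : P_0^1=P_a^1\}$ is either a subgroup of $G$ of index $2$, or $A=G$.
   Context: A function $f:G\to H$ is semi-planar if for every non-identity $a\in G$ and every $y\in H$, the equation $f(x+a)-f(x)=y$ has either $0$ or $2$ solutions $x\in G$. The incidence structure $S(G,H;f)$ has points $(x,y)\in G\times H$ and lines $\mathcal{L}(a,b)$ for $(a,b)\in G\times H$, with $(x,y)$ incident with $\mathcal{L}(a,b)$ iff $y=f(x-a)+b$. Its incidence graph is the bipartite graph on points and lines with an edge for each incident pair. $S(G,H;f)$ splits into two substructures $S_1,S_2$ if its incidence graph has exactly two connected components; $S_1,S_2$ are the incidence structures formed by the points and lines of the two components, and $\mathcal{L}(a,b)\in S_i$ means the line lies in component $S_i$. *)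

theory Defs
  imports Main
begin

definition semi_planar :: "('g::{ab_group_add,finite} \<Rightarrow> 'h::ab_group_add) \<Rightarrow> bool" where
  "semi_planar f \<longleftrightarrow>
     (\<forall>a. a \<noteq> 0 \<longrightarrow> (\<forall>y. card {x. f (x + a) - f x = y} \<in> {0, 2}))"

text \<open>Incidence graph of S(G,H;f): vertices are points Inl (x,y) and lines Inr (a,b);
  (x,y) is incident with L(a,b) iff y = f(x-a)+b. Edges are undirected.\<close>
definition incidence_edges ::
  "('g::ab_group_add \<Rightarrow> 'h::ab_group_add) \<Rightarrow> ((('g \<times> 'h) + ('g \<times> 'h)) \<times> (('g \<times> 'h) + ('g \<times> 'h))) set" where
  "incidence_edges f =
     {(Inl (x, y), Inr (a, b)) | x y a b. y = f (x - a) + b}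
   \<union> {(Inr (a, b), Inl (x, y)) | x y a b. y = f (x - a) + b}"

definition incidence_conn where
  "incidence_conn f = (incidence_edges f)\<^sup>*"

text \<open>S(G,H;f) splits into two substructures: the incidence graph has exactly two components.\<close>
definition splits_into_two :: "('g::ab_group_add \<Rightarrow> 'h::ab_group_add) \<Rightarrow> bool" where
  "splits_into_two f \<longleftrightarrow> card (UNIV // incidence_conn f) = 2"

definition P1 :: "('g::ab_group_add \<Rightarrow> 'h::ab_group_add) \<Rightarrow> 'g \<Rightarrow> 'h set" where
  "P1 f a = {b. (Inr (0, 0), Inr (a, b)) \<in> incidence_conn f}"

definition add_subgroup :: "'g::ab_group_add set \<Rightarrow> bool" where
  "add_subgroup A \<longleftrightarrow> 0 \<in> A \<and> (\<forall>x\<in>A. \<forall>y\<in>A. x + y \<in> A) \<and> (\<forall>x\<in>A. - x \<in> A)"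

end

theory Submission
  imports Defs
begin

fun trv :: "'g::ab_group_add \<Rightarrow> 'h::ab_group_add \<Rightarrow> ('g \<times> 'h) + ('g \<times> 'h) \<Rightarrow> ('g \<times> 'h) + ('g \<times> 'h)" where
  "trv c d (Inl (x, y)) = Inl (x + c, y + d)"
| "trv c d (Inr (x, y)) = Inr (x + c, y + d)"

lemma edge_tr:
  assumes "(u, v) \<in> incidence_edges f"
  shows "(trv c d u, trv c d v) \<in> incidence_edges f"
proof -
  have e: "\<And>x a. f ((x + c) - (a + c)) = f (x - a)" by (simp add: algebra_simps)
  show ?thesis using assms unfolding incidence_edges_def
    by (auto simp: e)
qed

lemma conn_tr:
  assumes "(u, v) \<in> incidence_conn f"
  shows "(trv c d u, trv c d v) \<in> incidence_conn f"
  using assms unfolding incidence_conn_def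
proof (induction rule: rtrancl_induct)
  case base then show ?case by simp
next
  case (step y z)
  then show ?case using edge_tr[OF step(2)] by (meson rtrancl_into_rtrancl)
qed

lemma conn_sym: "sym (incidence_conn f)"
proof -
  have "sym (incidence_edges f)" unfolding sym_def incidence_edges_def by blast
  then show ?thesis unfolding incidence_conn_def by (rule sym_rtrancl)
qed

lemma conn_equiv: "equiv UNIV (incidence_conn f)"
  unfolding equiv_def incidence_conn_def
  using conn_sym[of f] unfolding incidence_conn_def
  by (simp add: refl_rtrancl trans_rtrancl)

definition KK :: "('g::ab_group_add \<Rightarrow> 'h::ab_group_add) \<Rightarrow> ('g \<times> 'h) set" where
  "KK f = {(a, b). (Inr (0, 0), Inr (a, b)) \<in> incidence_conn f}"

lemma K_add:
  assumes "(a, b) \<in> KK f" "(a', b') \<in> KK f"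
  shows "(a + a', b + b') \<in> KK f"
proof -
  have "(trv a b (Inr (0,0)), trv a b (Inr (a', b'))) \<in> incidence_conn f"
    using assms(2) unfolding KK_def by (intro conn_tr) simp
  then have "(Inr (a, b), Inr (a + a', b + b')) \<in> incidence_conn f"
    by (simp add: add.commute)
  moreover have "(Inr (0,0), Inr (a, b)) \<in> incidence_conn f" using assms(1) unfolding KK_def by simp
  ultimately show ?thesis unfolding KK_def incidence_conn_def by auto
qed

lemma K_neg:
  assumes "(a, b) \<in> KK f"
  shows "(- a, - b) \<in> KK f"
proof -
  have "(trv (-a) (-b) (Inr (0,0)), trv (-a) (-b) (Inr (a, b))) \<in> incidence_conn f"
    using assms unfolding KK_def by (intro conn_tr) simp
  then have "(Inr (-a, -b), Inr (0, 0)) \<in> incidence_conn f" by simp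
  then show ?thesis using conn_sym[of f] unfolding KK_def sym_def by blast
qed

lemma K_zero: "(0, 0) \<in> KK f"
  unfolding KK_def incidence_conn_def by simp

lemma K_diff:
  assumes "(a, b) \<in> KK f" "(a', b') \<in> KK f"
  shows "(a - a', b - b') \<in> KK f"
  using K_add[OF assms(1) K_neg[OF assms(2)]] by simp

lemma P1_K: "b \<in> P1 f a \<longleftrightarrow> (a, b) \<in> KK f"
  unfolding P1_def KK_def by simp

lemma A_char: "P1 f 0 = P1 f a \<longleftrightarrow> (a, 0) \<in> KK f"
proof
  assume "P1 f 0 = P1 f a"
  moreover have "0 \<in> P1 f 0" using K_zero P1_K by blast
  ultimately show "(a, 0) \<in> KK f" using P1_K by blast
next
  assume h: "(a, 0) \<in> KK f"
  show "P1 f 0 = P1 f a"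
  proof (intro set_eqI iffI)
    fix b assume "b \<in> P1 f 0"
    then have "(0, b) \<in> KK f" using P1_K by blast
    from K_add[OF h this] show "b \<in> P1 f a" by (simp add: P1_K)
  next
    fix b assume "b \<in> P1 f a"
    then have "(a, b) \<in> KK f" using P1_K by blast
    from K_diff[OF this h] show "b \<in> P1 f 0" by (simp add: P1_K)
  qed
qed

lemma three_classes:
  fixes f :: "'g::{ab_group_add,finite} \<Rightarrow> 'h::{ab_group_add,finite}"
  assumes "splits_into_two f"
    and "(u, v) \<notin> incidence_conn f" "(u, w) \<notin> incidence_conn f" "(v, w) \<notin> incidence_conn f"
  shows False
proof -
  let ?r = "incidence_conn f"
  have eq: "equiv UNIV ?r" by (rule conn_equiv)
  have d1: "?r `` {u} \<noteq> ?r `` {v}" using assms(2) eq equiv_class_eq_iff by fastforce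
  have d2: "?r `` {u} \<noteq> ?r `` {w}" using assms(3) eq equiv_class_eq_iff by fastforce
  have d3: "?r `` {v} \<noteq> ?r `` {w}" using assms(4) eq equiv_class_eq_iff by fastforce
  have sub: "{?r `` {u}, ?r `` {v}, ?r `` {w}} \<subseteq> UNIV // ?r"
    by (auto intro: quotientI)
  have "card {?r `` {u}, ?r `` {v}, ?r `` {w}} = 3" using d1 d2 d3 by simp
  moreover have "card {?r `` {u}, ?r `` {v}, ?r `` {w}} \<le> card (UNIV // ?r)"
    by (rule card_mono[OF _ sub]) simp
  ultimately show False using assms(1) unfolding splits_into_two_def by simp
qed

theorem theorem3:
  fixes f :: "'g::{ab_group_add,finite} \<Rightarrow> 'h::{ab_group_add,finite}"
  assumes "(card (UNIV :: 'g set)) = (card (UNIV :: 'h set))"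
    and "even (card (UNIV :: 'g set))"
    and "(card (UNIV :: 'g set)) > 2"
    and "semi_planar f"
    and "splits_into_two f"
  shows "(add_subgroup {a. P1 f 0 = P1 f a} \<and> 2 * card {a. P1 f 0 = P1 f a} = (card (UNIV :: 'g set)))
         \<or> {a. P1 f 0 = P1 f a} = UNIV"
proof -
  let ?A = "{a. P1 f 0 = P1 f a}"
  have A: "?A = {a. (a, 0) \<in> KK f}" using A_char by blast
  have sg: "add_subgroup ?A" unfolding A add_subgroup_def
    using K_zero K_add K_neg by fastforce
  show ?thesis
  proof (cases "?A = UNIV")
    case True then show ?thesis by simp
  next
    case False
    then obtain a0 where a0: "(a0, 0) \<notin> KK f" using A by auto
    have cov: "\<And>g. (g, 0) \<notin> KK f \<Longrightarrow> (g - a0, 0) \<in> KK f"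
    proof -
      fix g assume g: "(g, 0) \<notin> KK f"
      have "(Inr (a0, 0), Inr (g, 0)) \<in> incidence_conn f"
      proof (rule ccontr)
        assume n: "(Inr (a0, 0), Inr (g, 0)) \<notin> incidence_conn f"
        show False
          by (rule three_classes[OF assms(5), of "Inr (0,0)" "Inr (a0,0)" "Inr (g,0)"])
             (use a0 g n in \<open>auto simp: KK_def\<close>)
      qed
      from conn_tr[OF this, of "-a0" 0]
      show "(g - a0, 0) \<in> KK f" unfolding KK_def by simp
    qed
    have U: "UNIV = ?A \<union> (\<lambda>x. x + a0) ` ?A"
    proof (intro set_eqI iffI)
      fix g :: 'g
      show "g \<in> ?A \<union> (\<lambda>x. x + a0) ` ?A"
      proof (cases "(g, 0) \<in> KK f")
        case True then show ?thesis using A by auto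
      next
        case False
        then have "g - a0 \<in> ?A" using cov A by auto
        then have "g \<in> (\<lambda>x. x + a0) ` ?A" by (intro image_eqI[of _ _ "g - a0"]) simp_all
        then show ?thesis by blast
      qed
    qed simp
    have disj: "?A \<inter> (\<lambda>x. x + a0) ` ?A = {}"
    proof (rule ccontr)
      assume "?A \<inter> (\<lambda>x. x + a0) ` ?A \<noteq> {}"
      then obtain x where x: "x \<in> ?A" "x + a0 \<in> ?A" by auto
      then have "(x + a0 - x, 0 - 0) \<in> KK f" using A K_diff by blast
      then show False using a0 by simp
    qed
    have ci: "card ((\<lambda>x. x + a0) ` ?A) = card ?A" by (rule card_image) (simp add: inj_on_def)
    have "card (UNIV :: 'g set) = card ?A + card ((\<lambda>x. x + a0) ` ?A)"
      by (subst U, rule card_Un_disjoint) (use disj in auto)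
    then show ?thesis using sg ci by simp
  qed
qed

end
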